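(* Let $f : \{0, 1\}^n \to \{0, 1\}$ be a Boolean function. Then $\mathsf{D}_{\mathrm{cc}}^\rightarrow(f \circ \mathsf{AND}) = \lceil\log(\mathsf{Pat}^{\mathsf{M}}(f))\rceil$.
   Context: Every $f:\{0,1\}^n\to\{0,1\}$ has a unique M\"obius expansion $f=\sum_{S\subseteq[n]}\widetilde f(S)\mathsf{AND}_S$ with real coefficients, where $\mathsf{AND}_S(x)=\prod_{i\in S}x_i$; its M\"obius support is $\mathcal{S}_f=\{S:\widetilde f(S)\ne0\}$. The pattern of $x\in\{0,1\}^n$ is the vector $(\mathsf{AND}_S(x))_{S\in\mathcal S_f}\in\{0,1\}^{\mathcal S_f}$, and the M\"obius pattern complexity $\mathsf{Pat}^{\mathsf{M}}(f)$ is the number of distinct patterns over all $x\in\{0,1\}^n$. $f\circ\mathsf{AND}$ is the two-party function $(x,y)\mapsto f(x_1\wedge y_1,\dots,x_n\wedge y_n)$ (Alice holds $x$, Bob $y$); $\mathsf{D}_{\mathrm{cc}}^\rightarrow$ is deterministic one-way communication complexity. Logarithms are base 2. *)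

theory Defs
  imports Complex_Main
begin

text \<open>A point x of {0,1}^n is encoded by the set of its coordinates equal to 1,
  i.e. a subset of {..<n}.  A Boolean function f : {0,1}^n -> {0,1} is a map
  nat set => bool, only its values on subsets of {..<n} matter.\<close>

definition AND_S :: "nat set \<Rightarrow> nat set \<Rightarrow> bool" where
  "AND_S S x \<longleftrightarrow> S \<subseteq> x"

definition mobius_coeff :: "nat \<Rightarrow> (nat set \<Rightarrow> bool) \<Rightarrow> nat set \<Rightarrow> real" where
  "mobius_coeff n f = (THE c. (\<forall>S. \<not> S \<subseteq> {..<n} \<longrightarrow> c S = 0) \<and>
      (\<forall>x. x \<subseteq> {..<n} \<longrightarrow>
          of_bool (f x) = (\<Sum>S\<in>Pow {..<n}. c S * of_bool (AND_S S x))))"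

definition mobius_support :: "nat \<Rightarrow> (nat set \<Rightarrow> bool) \<Rightarrow> nat set set" where
  "mobius_support n f = {S. S \<subseteq> {..<n} \<and> mobius_coeff n f S \<noteq> 0}"

definition pattern :: "nat \<Rightarrow> (nat set \<Rightarrow> bool) \<Rightarrow> nat set \<Rightarrow> (nat set \<Rightarrow> bool)" where
  "pattern n f x = (\<lambda>S. if S \<in> mobius_support n f then AND_S S x else undefined)"

definition Pat_M :: "nat \<Rightarrow> (nat set \<Rightarrow> bool) \<Rightarrow> nat" where
  "Pat_M n f = card (pattern n f ` Pow {..<n})"

definition one_way_protocol :: "nat \<Rightarrow> (nat set \<Rightarrow> nat set \<Rightarrow> bool) \<Rightarrow> nat \<Rightarrow> bool" where
  "one_way_protocol n F k \<longleftrightarrow> (\<exists>(M :: nat set \<Rightarrow> bool list) (B :: bool list \<Rightarrow> nat set \<Rightarrow> bool).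
     (\<forall>x. x \<subseteq> {..<n} \<longrightarrow> length (M x) = k) \<and>
     (\<forall>x y. x \<subseteq> {..<n} \<longrightarrow> y \<subseteq> {..<n} \<longrightarrow> F x y = B (M x) y))"

definition D_oneway :: "nat \<Rightarrow> (nat set \<Rightarrow> nat set \<Rightarrow> bool) \<Rightarrow> nat" where
  "D_oneway n F = (LEAST k. one_way_protocol n F k)"

definition comp_AND :: "(nat set \<Rightarrow> bool) \<Rightarrow> nat set \<Rightarrow> nat set \<Rightarrow> bool" where
  "comp_AND f x y = f (x \<inter> y)"

end

theory Submission
  imports Defs
begin

lemma mob_unique:
  fixes d :: "nat set \<Rightarrow> real"
  assumes A: "finite A"
    and h: "\<And>y. y \<subseteq> A \<Longrightarrow> (\<Sum>S\<in>Pow A. d S * of_bool (AND_S S y)) = 0"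
  shows "\<forall>S\<in>Pow A. d S = 0"
proof (rule ccontr)
  assume "\<not> ?thesis"
  then have ex: "\<exists>S. S \<in> Pow A \<and> d S \<noteq> 0" by blast
  then obtain S0 where S0: "S0 \<in> Pow A \<and> d S0 \<noteq> 0" by blast
  from ex_has_least_nat[of "\<lambda>S. S \<in> Pow A \<and> d S \<noteq> 0", OF S0, of card]
  obtain S where S': "S \<in> Pow A \<and> d S \<noteq> 0"
    and mn': "\<forall>T. T \<in> Pow A \<and> d T \<noteq> 0 \<longrightarrow> card S \<le> card T" by blast
  have S: "S \<in> Pow A" "d S \<noteq> 0" using S' by auto
  have mn: "card S \<le> card T" if "T \<in> Pow A" "d T \<noteq> 0" for T using mn' that by blast
  have "(\<Sum>T\<in>Pow A. d T * of_bool (AND_S T S)) = (\<Sum>T\<in>Pow A. if T = S then d S else 0)"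
  proof (rule sum.cong[OF refl])
    fix T assume T: "T \<in> Pow A"
    show "d T * of_bool (AND_S T S) = (if T = S then d S else 0)"
    proof (cases "T = S")
      case False
      show ?thesis
      proof (cases "T \<subseteq> S")
        case True
        with False have "T \<subset> S" by blast
        moreover have "finite S" using S A finite_subset by auto
        ultimately have "card T < card S" by (simp add: psubset_card_mono)
        then have "d T = 0" using mn[OF T] by force
        then show ?thesis using False by simp
      qed (simp add: AND_S_def False)
    qed (simp add: AND_S_def)
  qed
  also have "\<dots> = d S" using S A by simp
  finally show False using h[of S] S by simp
qed

lemma mob_exists:
  fixes F :: "nat set \<Rightarrow> real"
  shows "\<exists>c. (\<forall>S. \<not> S \<subseteq> {..<n} \<longrightarrow> c S = 0) \<and>
      (\<forall>x. x \<subseteq> {..<n} \<longrightarrow> F x = (\<Sum>S\<in>Pow {..<n}. c S * of_bool (AND_S S x)))"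
proof -
  define g where "g S = (\<Sum>T\<in>Pow S. (-1) ^ card T * F T)" for S
  define c where "c T = (if T \<subseteq> {..<n} then (-1) ^ card T * g T else 0)" for T
  have inv: "F S = (\<Sum>T\<in>Pow S. (-1) ^ card T * g T)" if "finite S" for S
    by (rule inclusion_exclusion_symmetric[OF _ that]) (simp add: g_def)
  show ?thesis
  proof (intro exI[of _ c] conjI allI impI)
    fix S assume "\<not> S \<subseteq> {..<n}" then show "c S = 0" by (simp add: c_def)
  next
    fix x :: "nat set" assume x: "x \<subseteq> {..<n}"
    have fx: "finite x" using x finite_subset by blast
    have "(\<Sum>S\<in>Pow {..<n}. c S * of_bool (AND_S S x))
        = (\<Sum>S\<in>Pow {..<n}. if S \<subseteq> x then (-1) ^ card S * g S else 0)"
      by (rule sum.cong[OF refl]) (auto simp: c_def AND_S_def)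
    also have "\<dots> = (\<Sum>S\<in>{S\<in>Pow {..<n}. S \<subseteq> x}. (-1) ^ card S * g S)"
      by (rule sum.inter_filter[symmetric]) simp
    also have "{S\<in>Pow {..<n}. S \<subseteq> x} = Pow x" using x by auto
    finally show "F x = (\<Sum>S\<in>Pow {..<n}. c S * of_bool (AND_S S x))"
      using inv[OF fx] by simp
  qed
qed

lemma mob_spec:
  "(\<forall>S. \<not> S \<subseteq> {..<n} \<longrightarrow> mobius_coeff n f S = 0) \<and>
      (\<forall>x. x \<subseteq> {..<n} \<longrightarrow>
          of_bool (f x) = (\<Sum>S\<in>Pow {..<n}. mobius_coeff n f S * of_bool (AND_S S x)))"
proof -
  let ?P = "\<lambda>c. (\<forall>S. \<not> S \<subseteq> {..<n} \<longrightarrow> c S = 0) \<and>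
      (\<forall>x. x \<subseteq> {..<n} \<longrightarrow> (of_bool (f x)::real) = (\<Sum>S\<in>Pow {..<n}. c S * of_bool (AND_S S x)))"
  have ex1: "\<exists>!c. ?P c"
  proof (rule ex_ex1I)
    show "\<exists>c. ?P c" by (rule mob_exists)
  next
    fix c c' assume c: "?P c" and c': "?P c'"
    have "\<forall>S\<in>Pow {..<n}. (\<lambda>S. c S - c' S) S = 0"
    proof (rule mob_unique)
      fix y assume y: "y \<subseteq> {..<n}"
      have "(\<Sum>S\<in>Pow {..<n}. (c S - c' S) * of_bool (AND_S S y))
        = (\<Sum>S\<in>Pow {..<n}. c S * of_bool (AND_S S y)) - (\<Sum>S\<in>Pow {..<n}. c' S * of_bool (AND_S S y))"
        by (simp add: left_diff_distrib sum_subtractf)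
      also have "\<dots> = 0" using c c' y by simp
      finally show "(\<Sum>S\<in>Pow {..<n}. (c S - c' S) * of_bool (AND_S S y)) = 0" .
    qed simp
    then show "c = c'" using c c' by (intro ext) (metis PowI eq_iff_diff_eq_0)
  qed
  from theI'[OF ex1] show ?thesis unfolding mobius_coeff_def .
qed

lemma log_le_pow: "(N::nat) \<ge> 1 \<Longrightarrow> log 2 (real N) \<le> real k \<longleftrightarrow> N \<le> 2^k"
  by (meson dual_order.strict_trans1 less_log2_of_power linorder_not_less
    log2_of_power_le not_one_le_zero)

lemma row_pat:
  assumes x: "x \<subseteq> {..<n}" and x': "x' \<subseteq> {..<n}"
  shows "(\<forall>y. y \<subseteq> {..<n} \<longrightarrow> f (x \<inter> y) = f (x' \<inter> y)) \<longleftrightarrow> pattern n f x = pattern n f x'"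
proof -
  let ?c = "mobius_coeff n f"
  have exp: "of_bool (f (z \<inter> y)) = (\<Sum>S\<in>Pow {..<n}. ?c S * of_bool (AND_S S z \<and> AND_S S y))"
    if "z \<subseteq> {..<n}" for z y
  proof -
    have "z \<inter> y \<subseteq> {..<n}" using that by auto
    then have "of_bool (f (z \<inter> y)) = (\<Sum>S\<in>Pow {..<n}. ?c S * of_bool (AND_S S (z \<inter> y)))"
      using mob_spec[of n f] by blast
    also have "\<dots> = (\<Sum>S\<in>Pow {..<n}. ?c S * of_bool (AND_S S z \<and> AND_S S y))"
      by (rule sum.cong[OF refl]) (simp add: AND_S_def)
    finally show ?thesis .
  qed
  show ?thesis
  proof
    assume r: "\<forall>y. y \<subseteq> {..<n} \<longrightarrow> f (x \<inter> y) = f (x' \<inter> y)"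
    define d where "d S = ?c S * (of_bool (AND_S S x) - of_bool (AND_S S x'))" for S
    have "\<forall>S\<in>Pow {..<n}. d S = 0"
    proof (rule mob_unique)
      fix y assume y: "y \<subseteq> {..<n}"
      have "(\<Sum>S\<in>Pow {..<n}. d S * of_bool (AND_S S y))
        = (\<Sum>S\<in>Pow {..<n}. ?c S * of_bool (AND_S S x \<and> AND_S S y)) -
          (\<Sum>S\<in>Pow {..<n}. ?c S * of_bool (AND_S S x' \<and> AND_S S y))"
        unfolding sum_subtractf[symmetric] by (rule sum.cong[OF refl]) (auto simp: d_def)
      also have "\<dots> = of_bool (f (x \<inter> y)) - of_bool (f (x' \<inter> y))"
        using exp[OF x] exp[OF x'] by simp
      also have "\<dots> = 0" using r y by simp
      finally show "(\<Sum>S\<in>Pow {..<n}. d S * of_bool (AND_S S y)) = 0" .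
    qed simp
    then show "pattern n f x = pattern n f x'"
      unfolding pattern_def mobius_support_def
      by (intro ext) (auto simp: d_def split: if_splits)
  next
    assume p: "pattern n f x = pattern n f x'"
    have eq: "AND_S S x = AND_S S x'" if "S \<subseteq> {..<n}" "?c S \<noteq> 0" for S
      using fun_cong[OF p, of S] that by (simp add: pattern_def mobius_support_def)
    show "\<forall>y. y \<subseteq> {..<n} \<longrightarrow> f (x \<inter> y) = f (x' \<inter> y)"
    proof (intro allI impI)
      fix y assume y: "y \<subseteq> {..<n}"
      have "(of_bool (f (x \<inter> y))::real) = of_bool (f (x' \<inter> y))"
        unfolding exp[OF x] exp[OF x']
      proof (rule sum.cong[OF refl])
        fix S assume "S \<in> Pow {..<n}"
        then show "?c S * of_bool (AND_S S x \<and> AND_S S y) = ?c S * of_bool (AND_S S x' \<and> AND_S S y)"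
          using eq[of S] by (cases "?c S = 0") auto
      qed
      then show "f (x \<inter> y) = f (x' \<inter> y)"
        by (cases "f (x \<inter> y)"; cases "f (x' \<inter> y)") simp_all
    qed
  qed
qed

lemma proto_iff:
  "one_way_protocol n (comp_AND f) k \<longleftrightarrow> card (pattern n f ` Pow {..<n}) \<le> 2^k"
proof
  let ?L = "{xs::bool list. set xs \<subseteq> UNIV \<and> length xs = k}"
  have cL: "card ?L = 2^k" using card_lists_length_eq[of "UNIV::bool set" k] by simp 
  have fL: "finite ?L" by (rule finite_lists_length_eq) simp
  assume "one_way_protocol n (comp_AND f) k"
  then obtain M :: "nat set \<Rightarrow> bool list" and B :: "bool list \<Rightarrow> nat set \<Rightarrow> bool" where
    MB: "(\<forall>x. x \<subseteq> {..<n} \<longrightarrow> length (M x) = k) \<and>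
     (\<forall>x y. x \<subseteq> {..<n} \<longrightarrow> y \<subseteq> {..<n} \<longrightarrow> comp_AND f x y = B (M x) y)"
    unfolding one_way_protocol_def by (elim exE)
  have M: "\<And>x. x \<subseteq> {..<n} \<Longrightarrow> length (M x) = k" using MB by simp
  have B: "\<And>x y. x \<subseteq> {..<n} \<Longrightarrow> y \<subseteq> {..<n} \<Longrightarrow> comp_AND f x y = B (M x) y"
    using MB by simp
  let ?h = "\<lambda>m. pattern n f (SOME x. x \<in> Pow {..<n} \<and> M x = m)"
  have eqP: "pattern n f ` Pow {..<n} = ?h ` (M ` Pow {..<n})"
  proof -
    have "pattern n f x = ?h (M x)" if x: "x \<in> Pow {..<n}" for x
    proof -
      define x0 where "x0 = (SOME z. z \<in> Pow {..<n} \<and> M z = M x)"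
      have x0: "x0 \<in> Pow {..<n} \<and> M x0 = M x"
        unfolding x0_def by (rule someI[of _ x]) (use x in auto)
      have "\<forall>y. y \<subseteq> {..<n} \<longrightarrow> f (x \<inter> y) = f (x0 \<inter> y)"
        using B x x0 by (metis PowD comp_AND_def)
      then have "pattern n f x = pattern n f x0" using row_pat x x0 by blast
      then show ?thesis by (simp add: x0_def)
    qed
    then show ?thesis by (auto simp: image_image)
  qed
  have "card (?h ` (M ` Pow {..<n})) \<le> card (M ` Pow {..<n})"
    by (rule card_image_le) simp
  then have "card (pattern n f ` Pow {..<n}) \<le> card (M ` Pow {..<n})"
    by (simp only: eqP)
  also have "\<dots> \<le> card ?L"
    by (rule card_mono[OF fL]) (auto simp: M)
  finally show "card (pattern n f ` Pow {..<n}) \<le> 2^k" using cL by simp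
next
  let ?L = "{xs::bool list. set xs \<subseteq> UNIV \<and> length xs = k}"
  have cL: "card ?L = 2^k" using card_lists_length_eq[of "UNIV::bool set" k] by simp 
  have fL: "finite ?L" by (rule finite_lists_length_eq) simp
  let ?P = "pattern n f ` Pow {..<n}"
  assume "card ?P \<le> 2^k"
  then obtain g where g: "g ` ?P \<subseteq> ?L" "inj_on g ?P"
  proof -
    have "finite ?P" by simp
    then show ?thesis using that card_le_inj[OF _ fL, of ?P] cL \<open>card ?P \<le> 2^k\<close> by auto
  qed
  define M where "M x = g (pattern n f x)" for x
  define B where "B m y = comp_AND f (SOME x. x \<in> Pow {..<n} \<and> M x = m) y" for m y
  show "one_way_protocol n (comp_AND f) k"
    unfolding one_way_protocol_def
  proof (intro exI conjI allI impI)
    fix x :: "nat set" assume "x \<subseteq> {..<n}"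
    then show "length (M x) = k" using g(1) by (auto simp: M_def)
  next
    fix x y :: "nat set" assume x: "x \<subseteq> {..<n}" and y: "y \<subseteq> {..<n}"
    define x0 where "x0 = (SOME z. z \<in> Pow {..<n} \<and> M z = M x)"
    have x0: "x0 \<in> Pow {..<n} \<and> M x0 = M x"
      unfolding x0_def by (rule someI[of _ x]) (use x in auto)
    then have "pattern n f x0 = pattern n f x"
      using g(2) x unfolding M_def inj_on_def by blast
    then have "f (x0 \<inter> y) = f (x \<inter> y)" using row_pat[of x0 n x f] x x0 y by auto
    moreover have "B (M x) y = comp_AND f x0 y" by (simp only: B_def x0_def)
    ultimately show "comp_AND f x y = B (M x) y"
      by (simp add: comp_AND_def)
  qed
qed

theorem claim4p1:
  fixes n :: nat and f :: "nat set \<Rightarrow> bool"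
  shows "D_oneway n (comp_AND f) = nat \<lceil>log 2 (real (Pat_M n f))\<rceil>"
proof -
  let ?N = "Pat_M n f"
  have "finite (pattern n f ` Pow {..<n})" by simp
  moreover have "pattern n f ` Pow {..<n} \<noteq> {}" using Pow_bottom by blast
  ultimately have "card (pattern n f ` Pow {..<n}) > 0" by (simp add: card_gt_0_iff)
  then have N1: "?N \<ge> 1" unfolding Pat_M_def by simp
  have key: "one_way_protocol n (comp_AND f) k \<longleftrightarrow> nat \<lceil>log 2 (real ?N)\<rceil> \<le> k" for k
  proof -
    have "nat \<lceil>log 2 (real ?N)\<rceil> \<le> k \<longleftrightarrow> \<lceil>log 2 (real ?N)\<rceil> \<le> int k"
      by (rule nat_le_iff)
    also have "\<dots> \<longleftrightarrow> log 2 (real ?N) \<le> real k"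
      by (metis ceiling_le_iff of_int_of_nat_eq)
    also have "\<dots> \<longleftrightarrow> ?N \<le> 2^k" by (rule log_le_pow[OF N1])
    finally show ?thesis unfolding proto_iff Pat_M_def by simp
  qed
  show ?thesis unfolding D_oneway_def key
    by (rule Least_equality) auto
qed

end
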